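(* Let $d\ge1$ and let $f$ be a Boolean function that is equivalent to a depth-$d$ decision tree and satisfies ${\rm psize}(f)=t\ge1$. Then some variable $x_i$ appears in at least $\lceil t/d\rceil$ monomials of the minimal polynomial representation of $f$.
   Context: Every Boolean function has a unique representation as a sum over $\mathbb{F}_2$ of distinct monomials (products of distinct variables, the empty product being the constant $1$). ${\rm psize}(f)$ is the number of non-constant monomials in this representation. A decision tree over $x_1,\dots,x_n$ is a rooted binary tree whose internal nodes are labeled by variables, each having a 0-child and a 1-child, leaves labeled $0$ or $1$; it computes a Boolean function by following from the root the $x_i$-child at a node labeled $x_i$; depth is the maximum number of edges on a root-to-leaf path. *)

theory Defs
  imports Complex_Main
begin

text \<open>Inputs are assignments x :: nat => bool; the variables are x 0, ..., x (n-1).\<close>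

datatype dtree = Leaf bool | Node nat dtree dtree

fun dt_eval :: "dtree \<Rightarrow> (nat \<Rightarrow> bool) \<Rightarrow> bool" where
  "dt_eval (Leaf b) x = b"
| "dt_eval (Node i t0 t1) x = (if x i then dt_eval t1 x else dt_eval t0 x)"

fun dt_depth :: "dtree \<Rightarrow> nat" where
  "dt_depth (Leaf b) = 0"
| "dt_depth (Node i t0 t1) = Suc (max (dt_depth t0) (dt_depth t1))"

fun dt_vars :: "dtree \<Rightarrow> nat set" where
  "dt_vars (Leaf b) = {}"
| "dt_vars (Node i t0 t1) = insert i (dt_vars t0 \<union> dt_vars t1)"

text \<open>Value of the F2-polynomial given by a set S of monomials (a monomial = set of variables;
  the empty monomial is the constant 1).\<close>
definition poly_eval :: "nat set set \<Rightarrow> (nat \<Rightarrow> bool) \<Rightarrow> bool" where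
  "poly_eval S x = odd (card {M \<in> S. \<forall>i\<in>M. x i})"

definition anf :: "nat \<Rightarrow> ((nat \<Rightarrow> bool) \<Rightarrow> bool) \<Rightarrow> nat set set" where
  "anf n f = (THE S. S \<subseteq> Pow {..<n} \<and> (\<forall>x. f x = poly_eval S x))"

definition psize :: "nat \<Rightarrow> ((nat \<Rightarrow> bool) \<Rightarrow> bool) \<Rightarrow> nat" where
  "psize n f = card (anf n f - {{}})"

end

theory Submission
  imports Defs "HOL-Library.FuncSet"
begin

lemma pe_ind: "poly_eval S (\<lambda>i. i \<in> A) = odd (card {N\<in>S. N \<subseteq> A})"
  unfolding poly_eval_def by (simp add: subset_eq)

lemma card_super: assumes "finite M" "N \<subseteq> M"
  shows "card {A\<in>Pow M. N \<subseteq> A} = 2 ^ card (M - N)"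
proof -
  have "bij_betw (\<lambda>A. A - N) {A\<in>Pow M. N \<subseteq> A} (Pow (M - N))"
    by (rule bij_betwI[where g="\<lambda>B. B \<union> N"]) (use assms in auto)
  hence "card {A\<in>Pow M. N \<subseteq> A} = card (Pow (M - N))" by (rule bij_betw_same_card)
  thus ?thesis using assms by (simp add: card_Pow)
qed

lemma mob: assumes "finite M"
  shows "(\<Sum>A\<in>Pow M. card {N\<in>S. N \<subseteq> A}) = (\<Sum>N\<in>{N\<in>S. N \<subseteq> M}. 2 ^ card (M - N))"
proof -
  let ?S' = "{N\<in>S. N \<subseteq> M}"
  have fS: "finite ?S'" using assms by (rule finite_subset[rotated, OF finite_Pow_iff[THEN iffD2]]) auto
  have "(\<Sum>A\<in>Pow M. card {N\<in>S. N \<subseteq> A}) = (\<Sum>A\<in>Pow M. \<Sum>N\<in>?S'. if N \<subseteq> A then 1 else 0)"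
  proof (rule sum.cong[OF refl])
    fix A assume "A \<in> Pow M"
    hence "{N\<in>S. N \<subseteq> A} = {N\<in>?S'. N \<subseteq> A}" by auto
    thus "card {N\<in>S. N \<subseteq> A} = (\<Sum>N\<in>?S'. if N \<subseteq> A then 1 else 0)"
      using fS by (simp add: sum.If_cases Int_def conj_commute)
  qed
  also have "\<dots> = (\<Sum>N\<in>?S'. \<Sum>A\<in>Pow M. if N \<subseteq> A then 1 else 0)" by (rule sum.swap)
  also have "\<dots> = (\<Sum>N\<in>?S'. card {A\<in>Pow M. N \<subseteq> A})"
    using assms by (intro sum.cong refl) (simp add: sum.If_cases Int_def conj_commute)
  also have "\<dots> = (\<Sum>N\<in>?S'. 2 ^ card (M - N))"
    using assms by (intro sum.cong refl card_super) auto
  finally show ?thesis .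
qed

lemma parity_mem: assumes "finite M"
  shows "M \<in> S \<longleftrightarrow> odd (card {A\<in>Pow M. poly_eval S (\<lambda>i. i \<in> A)})"
proof -
  let ?S' = "{N\<in>S. N \<subseteq> M}"
  have fS: "finite ?S'" using assms by (rule finite_subset[rotated, OF finite_Pow_iff[THEN iffD2]]) auto
  have "odd (card {A\<in>Pow M. poly_eval S (\<lambda>i. i \<in> A)}) = odd (\<Sum>A\<in>Pow M. card {N\<in>S. N \<subseteq> A})"
    using assms by (simp add: even_sum_iff pe_ind)
  also have "\<dots> = odd (\<Sum>N\<in>?S'. (2::nat) ^ card (M - N))" using mob[OF assms] by simp
  also have "\<dots> = odd (card {N\<in>?S'. odd ((2::nat) ^ card (M - N))})"
    using fS by (simp add: even_sum_iff)
  also have "{N\<in>?S'. odd ((2::nat) ^ card (M - N))} = {N\<in>S. N = M}"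
  proof -
    have "N \<subseteq> M \<Longrightarrow> odd ((2::nat) ^ card (M - N)) \<longleftrightarrow> N = M" for N
      using assms by (auto simp: finite_subset)
    thus ?thesis by auto
  qed
  also have "odd (card {N\<in>S. N = M}) = (M \<in> S)"
    by (cases "M \<in> S") (auto simp: Collect_conv_if)
  finally show ?thesis by simp
qed

lemma anf_unique:
  assumes "S1 \<subseteq> Pow {..<n}" "S2 \<subseteq> Pow {..<n}"
    and "\<forall>A\<subseteq>{..<n}. poly_eval S1 (\<lambda>i. i \<in> A) = poly_eval S2 (\<lambda>i. i \<in> A)"
  shows "S1 = S2"
proof (rule set_eqI)
  fix M
  show "M \<in> S1 \<longleftrightarrow> M \<in> S2"
  proof (cases "M \<subseteq> {..<n}")
    case True
    hence fM: "finite M" using finite_subset by blast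
    have "{A\<in>Pow M. poly_eval S1 (\<lambda>i. i \<in> A)} = {A\<in>Pow M. poly_eval S2 (\<lambda>i. i \<in> A)}"
      using assms(3) True by auto
    thus ?thesis using parity_mem[OF fM, of S1] parity_mem[OF fM, of S2] by simp
  next
    case False thus ?thesis using assms(1,2) by auto
  qed
qed

lemma poly_local:
  assumes "S \<subseteq> Pow U" "\<forall>i\<in>U. x i = y i"
  shows "poly_eval S x = poly_eval S y"
proof -
  have "{M \<in> S. \<forall>i\<in>M. x i} = {M \<in> S. \<forall>i\<in>M. y i}" using assms by blast
  thus ?thesis unfolding poly_eval_def by simp
qed

lemma anf_exists:
  assumes loc: "\<And>x y. \<forall>i<n. x i = y i \<Longrightarrow> f x = f y"
  shows "\<exists>S. S \<subseteq> Pow {..<n} \<and> (\<forall>x. f x = poly_eval S x)"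
proof -
  define U where "U = Pow {..<n::nat}"
  have fU: "finite U" unfolding U_def by simp
  define \<Phi> where "\<Phi> S = restrict (\<lambda>A. poly_eval S (\<lambda>i. i \<in> A)) U" for S
  have inj: "inj_on \<Phi> (Pow U)"
  proof (rule inj_onI)
    fix S1 S2 assume "S1 \<in> Pow U" "S2 \<in> Pow U" "\<Phi> S1 = \<Phi> S2"
    hence S12: "S1 \<subseteq> Pow {..<n}" "S2 \<subseteq> Pow {..<n}" "\<Phi> S1 = \<Phi> S2" by (auto simp: U_def)
    have "\<forall>A\<subseteq>{..<n}. poly_eval S1 (\<lambda>i. i \<in> A) = poly_eval S2 (\<lambda>i. i \<in> A)"
    proof (intro allI impI)
      fix A assume "A \<subseteq> {..<n}"
      hence AU: "A \<in> U" by (simp add: U_def)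
      have "\<Phi> S1 A = \<Phi> S2 A" using S12(3) by simp
      thus "poly_eval S1 (\<lambda>i. i \<in> A) = poly_eval S2 (\<lambda>i. i \<in> A)"
        using AU unfolding \<Phi>_def by (metis restrict_apply')
    qed
    thus "S1 = S2" by (rule anf_unique[OF S12(1,2)])
  qed
  have sub: "\<Phi> ` Pow U \<subseteq> U \<rightarrow>\<^sub>E (UNIV::bool set)" unfolding \<Phi>_def by auto
  have "card (\<Phi> ` Pow U) = card (U \<rightarrow>\<^sub>E (UNIV::bool set))"
    using card_image[OF inj] fU by (simp add: card_Pow card_PiE)
  moreover have finB: "finite (U \<rightarrow>\<^sub>E (UNIV::bool set))" by (intro finite_PiE fU) simp
  ultimately have eq: "\<Phi> ` Pow U = U \<rightarrow>\<^sub>E (UNIV::bool set)"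
    using card_subset_eq[OF finB sub] by simp
  have "restrict (\<lambda>A. f (\<lambda>i. i \<in> A)) U \<in> U \<rightarrow>\<^sub>E (UNIV::bool set)" by auto
  then obtain S where S: "S \<in> Pow U" "\<Phi> S = restrict (\<lambda>A. f (\<lambda>i. i \<in> A)) U"
    using eq by (metis imageE)
  have "f x = poly_eval S x" for x
  proof -
    define A where "A = {i. i < n \<and> x i}"
    have AU: "A \<in> U" unfolding A_def U_def by auto
    have "f x = f (\<lambda>i. i \<in> A)" by (rule loc) (auto simp: A_def)
    also have "\<dots> = poly_eval S (\<lambda>i. i \<in> A)"
    proof -
      have "\<Phi> S A = poly_eval S (\<lambda>i. i \<in> A)" using AU by (simp add: \<Phi>_def)
      moreover have "\<Phi> S A = f (\<lambda>i. i \<in> A)" using AU S(2) by simp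
      ultimately show ?thesis by simp
    qed
    also have "\<dots> = poly_eval S x"
    proof (rule poly_local[of S "{..<n}"])
      show "S \<subseteq> Pow {..<n}" using S(1) by (simp add: U_def)
      show "\<forall>i\<in>{..<n}. (i \<in> A) = x i" by (simp add: A_def)
    qed
    finally show ?thesis .
  qed
  thus ?thesis using S(1) unfolding U_def by auto
qed

lemma anf_props:
  assumes loc: "\<And>x y. \<forall>i<n. x i = y i \<Longrightarrow> f x = f y"
  shows "anf n f \<subseteq> Pow {..<n} \<and> (\<forall>x. f x = poly_eval (anf n f) x)"
proof -
  define P where "P = (\<lambda>S. S \<subseteq> Pow {..<n} \<and> (\<forall>x. f x = poly_eval S x))"
  have "\<exists>S. P S" using anf_exists[OF loc] unfolding P_def .
  then obtain S where S: "P S" by (rule exE)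
  have u: "S' = S" if "P S'" for S'
  proof (rule anf_unique[of S' n S])
    show "S' \<subseteq> Pow {..<n}" using that unfolding P_def by simp
    show "S \<subseteq> Pow {..<n}" using S unfolding P_def by simp
    have "\<forall>x. f x = poly_eval S' x" "\<forall>x. f x = poly_eval S x" using S that unfolding P_def by simp_all
    thus "\<forall>A\<subseteq>{..<n}. poly_eval S' (\<lambda>i. i \<in> A) = poly_eval S (\<lambda>i. i \<in> A)" by simp
  qed
  have "\<exists>!S. P S" by (rule ex1I[of P S, OF S u])
  hence "P (THE S. P S)" by (rule theI')
  moreover have "anf n f = (THE S. P S)" unfolding anf_def P_def by (rule refl)
  ultimately have "P (anf n f)" by simp
  thus ?thesis unfolding P_def .
qed

fun zp :: "dtree \<Rightarrow> nat set" where
  "zp (Leaf b) = {}"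
| "zp (Node i t0 t1) = insert i (zp t0)"

lemma zp_sub: "zp T \<subseteq> dt_vars T" by (induction T) auto
lemma zp_fin: "finite (zp T)" by (induction T) auto
lemma zp_card: "card (zp T) \<le> dt_depth T"
  by (induction T) (auto simp: card_insert_if zp_fin)
lemma zp_eval: "\<forall>i\<in>zp T. \<not> x i \<Longrightarrow> dt_eval T x = dt_eval T (\<lambda>_. False)"
  by (induction T) auto
lemma dt_local: "\<forall>i\<in>dt_vars T. x i = y i \<Longrightarrow> dt_eval T x = dt_eval T y"
  by (induction T) auto

theorem mainTheorem19:
  fixes n d t :: nat and f :: "(nat \<Rightarrow> bool) \<Rightarrow> bool" and T :: dtree
  assumes "d \<ge> 1"
    and "dt_vars T \<subseteq> {..<n}"
    and "dt_depth T = d"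
    and "\<forall>x. f x = dt_eval T x"
    and "psize n f = t" and "t \<ge> 1"
  shows "\<exists>i<n. int (card {M \<in> anf n f. i \<in> M}) \<ge> \<lceil>real t / real d\<rceil>"
proof -
  define S where "S = anf n f"
  have loc: "f x = f y" if "\<forall>i<n. x i = y i" for x y
  proof -
    have "\<forall>i\<in>dt_vars T. x i = y i" using assms(2) that by blast
    hence "dt_eval T x = dt_eval T y" by (rule dt_local)
    thus ?thesis using assms(4) by simp
  qed
  have SP: "S \<subseteq> Pow {..<n}" and fe: "\<And>x. f x = poly_eval S x"
    using anf_props[of n f, OF loc] unfolding S_def by auto
  have finS: "finite S" using SP by (rule finite_subset) simp
  let ?P = "zp T"
  have hit: "M \<inter> ?P \<noteq> {}" if M: "M \<in> S" "M \<noteq> {}" for M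
  proof
    assume dis: "M \<inter> ?P = {}"
    have fM: "finite M" using M SP finite_subset by blast
    have const: "f (\<lambda>i. i \<in> A) = f (\<lambda>_. False)" if "A \<subseteq> M" for A
    proof -
      have "\<forall>i\<in>zp T. \<not> i \<in> A" using dis that by blast
      hence "dt_eval T (\<lambda>i. i \<in> A) = dt_eval T (\<lambda>_. False)" by (rule zp_eval)
      thus ?thesis using assms(4) by simp
    qed
    have "odd (card {A\<in>Pow M. f (\<lambda>i. i \<in> A)})"
    proof -
      have "{A\<in>Pow M. f (\<lambda>i. i \<in> A)} = {A\<in>Pow M. poly_eval S (\<lambda>i. i \<in> A)}"
        by (simp only: fe)
      thus ?thesis using parity_mem[OF fM, of S] M(1) by simp
    qed
    moreover have "even (card {A\<in>Pow M. f (\<lambda>i. i \<in> A)})"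
    proof (cases "f (\<lambda>_. False)")
      case True
      hence "{A\<in>Pow M. f (\<lambda>i. i \<in> A)} = Pow M" using const by auto
      moreover have "card M > 0" using M(2) fM by (simp add: card_gt_0_iff)
      ultimately show ?thesis using fM by (simp add: card_Pow)
    next
      case False
      hence e: "{A\<in>Pow M. f (\<lambda>i. i \<in> A)} = {}" using const by auto
      show ?thesis unfolding e by simp
    qed
    ultimately show False by simp
  qed
  have cov: "S - {{}} \<subseteq> (\<Union>i\<in>?P. {M \<in> S. i \<in> M})" using hit by blast
  have Pn: "?P \<subseteq> {..<n}" using zp_sub assms(2) by blast
  have "t = card (S - {{}})" using assms(5) unfolding psize_def S_def by simp
  also have "\<dots> \<le> card (\<Union>i\<in>?P. {M \<in> S. i \<in> M})"
  proof (rule card_mono[OF _ cov])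
    have "(\<Union>i\<in>?P. {M \<in> S. i \<in> M}) \<subseteq> S" by blast
    thus "finite (\<Union>i\<in>?P. {M \<in> S. i \<in> M})" using finS by (rule finite_subset)
  qed
  also have "\<dots> \<le> (\<Sum>i\<in>?P. card {M \<in> S. i \<in> M})" by (rule card_UN_le[OF zp_fin])
  finally have tle: "t \<le> (\<Sum>i\<in>?P. card {M \<in> S. i \<in> M})" .
  have Pne: "?P \<noteq> {}" using tle assms(6) by auto
  obtain j where j: "j \<in> ?P" "\<forall>i\<in>?P. card {M \<in> S. i \<in> M} \<le> card {M \<in> S. j \<in> M}"
  proof -
    let ?g = "\<lambda>i. card {M \<in> S. i \<in> M}"
    have "Max (?g ` ?P) \<in> ?g ` ?P" using zp_fin Pne by (intro Max_in) auto
    then obtain j where j: "j \<in> ?P" "?g j = Max (?g ` ?P)" by auto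
    have "\<forall>i\<in>?P. ?g i \<le> ?g j" using j(2) zp_fin by (simp add: Max_ge)
    thus ?thesis using that j(1) by blast
  qed
  let ?m = "card {M \<in> S. j \<in> M}"
  have "(\<Sum>i\<in>?P. card {M \<in> S. i \<in> M}) \<le> card ?P * ?m"
    using sum_bounded_above[of ?P "\<lambda>i. card {M \<in> S. i \<in> M}" ?m] j(2) by simp
  also have "\<dots> \<le> d * ?m" using zp_card[of T] assms(3) by simp
  finally have "t \<le> d * ?m" using tle by linarith
  hence "real t \<le> real d * real ?m" by (metis of_nat_le_iff of_nat_mult)
  hence "real t / real d \<le> real ?m" using assms(1) by (simp add: divide_le_eq mult.commute)
  hence "\<lceil>real t / real d\<rceil> \<le> int ?m" by (simp add: ceiling_le_iff)
  thus ?thesis using j(1) Pn unfolding S_def by blast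
qed

end
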